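(* If $(v^*,\pi^* )$ is an SG-SP point of (OP), then $\pi^*$ is a stationary Nash equilibrium of the finite discounted stochastic game.
   Context: Setting. A finite discounted stochastic game consists of: a number of agents $N\ge 2$; a finite state space $S$; for each $x\in S$ and agent $i$ a finite nonempty action set $A^i(x)$, with $A(x)=\prod_{i=1}^N A^i(x)$ and $A^{-i}(x)=\prod_{j\neq i}A^j(x)$; transition probabilities $p(y\mid x,a)$ (a probability distribution over $y\in S$) for $x\in S$, $a\in A(x)$; real rewards $r^i(x,a)$; a discount factor $0<\beta<1$. A stationary strategy of agent $i$ is $\pi^i=(\pi^i(x,a^i))$ with $\pi^i(x,\cdot)$ a probability vector on $A^i(x)$ for each $x$; $\pi=(\pi^1,\dots,\pi^N)$, $\pi^{-i}=(\pi^j)_{j\ne i}$, $\pi(x,a)=\prod_j\pi^j(x,a^j)$, $\pi^{-i}(x,a^{-i})=\prod_{j\ne i}\pi^j(x,a^j)$, $R^i_\pi=(\sum_a\pi(x,a)r^i(x,a))_{x\in S}$, $P_\pi=(\sum_a\pi(x,a)p(y\mid x,a))_{x,y\in S}$, and $v^i_\pi=(I-\beta P_\pi)^{-1}R^i_\pi$. $\pi^*$ is a Nash equilibrium if $v^i_{\pi^*}(x)\ge v^i_{(\pi^i,\pi^{*-i})}(x)$ for all agents $i$, all stationary strategies $\pi^i$ of agent $i$ and all $x\in S$. For $v^i\in\mathbb R^S$: $Q^i_{\pi^{-i}}(x,a^i)=\sum_{a^{-i}\in A^{-i}(x)}\pi^{-i}(x,a^{-i})\big[r^i(x,(a^i,a^{-i}))+\beta\sum_{y}p(y\mid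 x,(a^i,a^{-i}))v^i(y)\big]$, and the Bellman error is $g^i_{x,a^i}(v^i,\pi^{-i})=Q^i_{\pi^{-i}}(x,a^i)-v^i(x)$. (OP): minimize $f(v,\pi)=\sum_{i=1}^N\sum_{x\in S}\big(v^i(x)-\sum_{a^i\in A^i(x)}\pi^i(x,a^i)Q^i_{\pi^{-i}}(x,a^i)\big)$ over $v=(v^1,\dots,v^N)$ and $\pi$, subject to (a) $\pi^i(x,a^i)\ge0$; (b) $\sum_{a^i\in A^i(x)}\pi^i(x,a^i)=1$; (c) $g^i_{x,a^i}(v^i,\pi^{-i})\le 0$, for all $i,x,a^i$. A point satisfying (a)–(c) is feasible. SG-SP point: a feasible point $(v^*,\pi^* )$ of (OP) such that $\pi^{*i}(x,a^i)\,g^i_{x,a^i}(v^{*i},\pi^{*-i})=0$ for every $x\in S$, every agent $i$ and every $a^i\in A^i(x)$. *)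

theory Defs
  imports "HOL-Analysis.Analysis"
begin

text \<open>Agents are 0..N-1, states are the elements of a
finite type 's (so S = UNIV), A i x is the action set of agent i in state x,
p x a y is the transition probability p(y | x, a), r i x a is the reward of agent i,
beta is the discount factor. Joint actions are functions on agents (extensional outside {..<N}).
A stationary strategy profile is pi :: nat => 's => 'a => real, pi i x ai = pi^i(x,ai).\<close>

definition joint_actions :: "nat \<Rightarrow> (nat \<Rightarrow> 's \<Rightarrow> 'a set) \<Rightarrow> 's \<Rightarrow> (nat \<Rightarrow> 'a) set" where
  "joint_actions N A x = PiE {..<N} (\<lambda>i. A i x)"

definition is_game ::
  "nat \<Rightarrow> (nat \<Rightarrow> 's::finite \<Rightarrow> 'a set) \<Rightarrow> ('s \<Rightarrow> (nat \<Rightarrow> 'a) \<Rightarrow> 's \<Rightarrow> real)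
   \<Rightarrow> real \<Rightarrow> bool" where
  "is_game N A p \<beta> \<longleftrightarrow> N \<ge> 2 \<and>
     (\<forall>i<N. \<forall>x. finite (A i x) \<and> A i x \<noteq> {}) \<and>
     (\<forall>x. \<forall>a\<in>joint_actions N A x. (\<forall>y. p x a y \<ge> 0) \<and> (\<Sum>y\<in>UNIV. p x a y) = 1) \<and>
     0 < \<beta> \<and> \<beta> < 1"

definition is_stationary_strategy :: "(nat \<Rightarrow> 's \<Rightarrow> 'a set) \<Rightarrow> nat \<Rightarrow> ('s \<Rightarrow> 'a \<Rightarrow> real) \<Rightarrow> bool" where
  "is_stationary_strategy A i \<sigma> \<longleftrightarrow>
     (\<forall>x. (\<forall>ai\<in>A i x. \<sigma> x ai \<ge> 0) \<and> (\<Sum>ai\<in>A i x. \<sigma> x ai) = 1)"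

definition is_strategy_profile :: "nat \<Rightarrow> (nat \<Rightarrow> 's \<Rightarrow> 'a set) \<Rightarrow> (nat \<Rightarrow> 's \<Rightarrow> 'a \<Rightarrow> real) \<Rightarrow> bool" where
  "is_strategy_profile N A \<pi> \<longleftrightarrow> (\<forall>i<N. is_stationary_strategy A i (\<pi> i))"

definition joint_prob :: "nat \<Rightarrow> (nat \<Rightarrow> 's \<Rightarrow> 'a \<Rightarrow> real) \<Rightarrow> 's \<Rightarrow> (nat \<Rightarrow> 'a) \<Rightarrow> real" where
  "joint_prob N \<pi> x a = (\<Prod>j<N. \<pi> j x (a j))"

definition reward_vec ::
  "nat \<Rightarrow> (nat \<Rightarrow> 's::finite \<Rightarrow> 'a set) \<Rightarrow> (nat \<Rightarrow> 's \<Rightarrow> (nat \<Rightarrow> 'a) \<Rightarrow> real)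
   \<Rightarrow> (nat \<Rightarrow> 's \<Rightarrow> 'a \<Rightarrow> real) \<Rightarrow> nat \<Rightarrow> real^'s" where
  "reward_vec N A r \<pi> i = (\<chi> x. \<Sum>a\<in>joint_actions N A x. joint_prob N \<pi> x a * r i x a)"

definition trans_mat ::
  "nat \<Rightarrow> (nat \<Rightarrow> 's::finite \<Rightarrow> 'a set) \<Rightarrow> ('s \<Rightarrow> (nat \<Rightarrow> 'a) \<Rightarrow> 's \<Rightarrow> real)
   \<Rightarrow> (nat \<Rightarrow> 's \<Rightarrow> 'a \<Rightarrow> real) \<Rightarrow> real^'s^'s" where
  "trans_mat N A p \<pi> = (\<chi> x y. \<Sum>a\<in>joint_actions N A x. joint_prob N \<pi> x a * p x a y)"

definition value_vec ::
  "nat \<Rightarrow> (nat \<Rightarrow> 's::finite \<Rightarrow> 'a set) \<Rightarrow> ('s \<Rightarrow> (nat \<Rightarrow> 'a) \<Rightarrow> 's \<Rightarrow> real)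
   \<Rightarrow> (nat \<Rightarrow> 's \<Rightarrow> (nat \<Rightarrow> 'a) \<Rightarrow> real) \<Rightarrow> real \<Rightarrow> (nat \<Rightarrow> 's \<Rightarrow> 'a \<Rightarrow> real) \<Rightarrow> nat \<Rightarrow> real^'s" where
  "value_vec N A p r \<beta> \<pi> i =
     matrix_inv (mat 1 - \<beta> *\<^sub>R trans_mat N A p \<pi>) *v reward_vec N A r \<pi> i"

definition is_Nash ::
  "nat \<Rightarrow> (nat \<Rightarrow> 's::finite \<Rightarrow> 'a set) \<Rightarrow> ('s \<Rightarrow> (nat \<Rightarrow> 'a) \<Rightarrow> 's \<Rightarrow> real)
   \<Rightarrow> (nat \<Rightarrow> 's \<Rightarrow> (nat \<Rightarrow> 'a) \<Rightarrow> real) \<Rightarrow> real \<Rightarrow> (nat \<Rightarrow> 's \<Rightarrow> 'a \<Rightarrow> real) \<Rightarrow> bool" where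
  "is_Nash N A p r \<beta> \<pi> \<longleftrightarrow> is_strategy_profile N A \<pi> \<and>
     (\<forall>i<N. \<forall>\<sigma>. is_stationary_strategy A i \<sigma> \<longrightarrow>
        (\<forall>x. value_vec N A p r \<beta> \<pi> i $ x \<ge> value_vec N A p r \<beta> (\<pi>(i := \<sigma>)) i $ x))"

text \<open>Q^i_{pi^{-i}}(x,a^i) for a given v^i; the sum over a^{-i} in A^{-i}(x) is the sum over
joint actions a with a i = ai, weighted by prod_{j ~= i} pi^j(x,a^j).\<close>
definition Q_val ::
  "nat \<Rightarrow> (nat \<Rightarrow> 's::finite \<Rightarrow> 'a set) \<Rightarrow> ('s \<Rightarrow> (nat \<Rightarrow> 'a) \<Rightarrow> 's \<Rightarrow> real)
   \<Rightarrow> (nat \<Rightarrow> 's \<Rightarrow> (nat \<Rightarrow> 'a) \<Rightarrow> real) \<Rightarrow> real \<Rightarrow> (nat \<Rightarrow> 's \<Rightarrow> 'a \<Rightarrow> real)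
   \<Rightarrow> nat \<Rightarrow> ('s \<Rightarrow> real) \<Rightarrow> 's \<Rightarrow> 'a \<Rightarrow> real" where
  "Q_val N A p r \<beta> \<pi> i vi x ai =
     (\<Sum>a\<in>{a\<in>joint_actions N A x. a i = ai}.
        (\<Prod>j\<in>{..<N} - {i}. \<pi> j x (a j)) * (r i x a + \<beta> * (\<Sum>y\<in>UNIV. p x a y * vi y)))"

definition bellman_err ::
  "nat \<Rightarrow> (nat \<Rightarrow> 's::finite \<Rightarrow> 'a set) \<Rightarrow> ('s \<Rightarrow> (nat \<Rightarrow> 'a) \<Rightarrow> 's \<Rightarrow> real)
   \<Rightarrow> (nat \<Rightarrow> 's \<Rightarrow> (nat \<Rightarrow> 'a) \<Rightarrow> real) \<Rightarrow> real \<Rightarrow> (nat \<Rightarrow> 's \<Rightarrow> 'a \<Rightarrow> real)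
   \<Rightarrow> nat \<Rightarrow> ('s \<Rightarrow> real) \<Rightarrow> 's \<Rightarrow> 'a \<Rightarrow> real" where
  "bellman_err N A p r \<beta> \<pi> i vi x ai = Q_val N A p r \<beta> \<pi> i vi x ai - vi x"

definition OP_feasible ::
  "nat \<Rightarrow> (nat \<Rightarrow> 's::finite \<Rightarrow> 'a set) \<Rightarrow> ('s \<Rightarrow> (nat \<Rightarrow> 'a) \<Rightarrow> 's \<Rightarrow> real)
   \<Rightarrow> (nat \<Rightarrow> 's \<Rightarrow> (nat \<Rightarrow> 'a) \<Rightarrow> real) \<Rightarrow> real
   \<Rightarrow> (nat \<Rightarrow> 's \<Rightarrow> real) \<Rightarrow> (nat \<Rightarrow> 's \<Rightarrow> 'a \<Rightarrow> real) \<Rightarrow> bool" where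
  "OP_feasible N A p r \<beta> v \<pi> \<longleftrightarrow> is_strategy_profile N A \<pi> \<and>
     (\<forall>i<N. \<forall>x. \<forall>ai\<in>A i x. bellman_err N A p r \<beta> \<pi> i (v i) x ai \<le> 0)"

definition SG_SP_point ::
  "nat \<Rightarrow> (nat \<Rightarrow> 's::finite \<Rightarrow> 'a set) \<Rightarrow> ('s \<Rightarrow> (nat \<Rightarrow> 'a) \<Rightarrow> 's \<Rightarrow> real)
   \<Rightarrow> (nat \<Rightarrow> 's \<Rightarrow> (nat \<Rightarrow> 'a) \<Rightarrow> real) \<Rightarrow> real
   \<Rightarrow> (nat \<Rightarrow> 's \<Rightarrow> real) \<Rightarrow> (nat \<Rightarrow> 's \<Rightarrow> 'a \<Rightarrow> real) \<Rightarrow> bool" where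
  "SG_SP_point N A p r \<beta> v \<pi> \<longleftrightarrow> OP_feasible N A p r \<beta> v \<pi> \<and>
     (\<forall>i<N. \<forall>x. \<forall>ai\<in>A i x. \<pi> i x ai * bellman_err N A p r \<beta> \<pi> i (v i) x ai = 0)"

end

theory Submission
  imports Defs
begin

lemma jp_split:
  assumes "i < N"
  shows "joint_prob N \<rho> x a = \<rho> i x (a i) * (\<Prod>j\<in>{..<N} - {i}. \<rho> j x (a j))"
  unfolding joint_prob_def using assms
  by (simp add: prod.remove)

lemma finite_J:
  assumes "\<forall>j<N. finite (A j x)"
  shows "finite (joint_actions N A x)"
  unfolding joint_actions_def using assms by (intro finite_PiE) auto

lemma row_identity:
  fixes A :: "nat \<Rightarrow> 's::finite \<Rightarrow> 'a set"
  assumes fin: "\<forall>j<N. finite (A j x)" and i: "i < N"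
  shows "reward_vec N A r \<rho> i $ x + \<beta> * (trans_mat N A p \<rho> *v w) $ x
       = (\<Sum>ai\<in>A i x. \<rho> i x ai * Q_val N A p r \<beta> \<rho> i (\<lambda>y. w $ y) x ai)"
proof -
  let ?J = "joint_actions N A x"
  define F where "F a = joint_prob N \<rho> x a * (r i x a + \<beta> * (\<Sum>y\<in>UNIV. p x a y * w $ y))" for a
  have finJ: "finite ?J" using fin by (rule finite_J)
  have t: "(trans_mat N A p \<rho> *v w) $ x = (\<Sum>a\<in>?J. joint_prob N \<rho> x a * (\<Sum>y\<in>UNIV. p x a y * w $ y))"
    unfolding trans_mat_def matrix_vector_mult_def
    by (simp add: sum_distrib_left sum_distrib_right mult.assoc sum.swap[where A=UNIV])
  have lhs: "reward_vec N A r \<rho> i $ x + \<beta> * (trans_mat N A p \<rho> *v w) $ x = (\<Sum>a\<in>?J. F a)"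
    unfolding t reward_vec_def F_def
    by (simp add: sum_distrib_left sum.distrib algebra_simps)
  have rhs: "(\<Sum>ai\<in>A i x. \<rho> i x ai * Q_val N A p r \<beta> \<rho> i (\<lambda>y. w $ y) x ai)
      = (\<Sum>ai\<in>A i x. \<Sum>a\<in>{a\<in>?J. a i = ai}. F a)"
  proof (rule sum.cong[OF refl])
    fix ai assume "ai \<in> A i x"
    show "\<rho> i x ai * Q_val N A p r \<beta> \<rho> i (\<lambda>y. w $ y) x ai = (\<Sum>a\<in>{a\<in>?J. a i = ai}. F a)"
      unfolding Q_val_def sum_distrib_left F_def
      by (rule sum.cong[OF refl]) (auto simp: jp_split[OF i])
  qed
  have g: "(\<Sum>ai\<in>A i x. \<Sum>a\<in>{a\<in>?J. a i = ai}. F a) = (\<Sum>a\<in>?J. F a)"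
    by (rule sum.group[OF finJ]) (use fin i in \<open>auto simp: joint_actions_def PiE_iff\<close>)
  show ?thesis using lhs rhs g by simp
qed


lemma trans_props:
  fixes A :: "nat \<Rightarrow> 's::finite \<Rightarrow> 'a set"
  assumes g: "is_game N A p \<beta>" and sp: "is_strategy_profile N A \<rho>"
  shows "trans_mat N A p \<rho> $ x $ y \<ge> 0" "(\<Sum>y\<in>UNIV. trans_mat N A p \<rho> $ x $ y) = 1"
proof -
  let ?J = "joint_actions N A x"
  have fin: "\<forall>j<N. finite (A j x)" using g unfolding is_game_def by auto
  have finJ: "finite ?J" using fin by (rule finite_J)
  have jp0: "joint_prob N \<rho> x a \<ge> 0" if "a \<in> ?J" for a
    unfolding joint_prob_def using that sp
    by (intro prod_nonneg) (auto simp: joint_actions_def PiE_iff is_strategy_profile_def is_stationary_strategy_def)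
  have pp: "\<forall>a\<in>?J. (\<forall>y. p x a y \<ge> 0) \<and> (\<Sum>y\<in>UNIV. p x a y) = 1" using g unfolding is_game_def by auto
  show "trans_mat N A p \<rho> $ x $ y \<ge> 0"
    unfolding trans_mat_def using jp0 pp by (auto intro!: sum_nonneg mult_nonneg_nonneg)
  have "(\<Sum>y\<in>UNIV. trans_mat N A p \<rho> $ x $ y) = (\<Sum>a\<in>?J. joint_prob N \<rho> x a * (\<Sum>y\<in>UNIV. p x a y))"
    unfolding trans_mat_def by (simp add: sum_distrib_left sum.swap[where A=UNIV])
  also have "\<dots> = (\<Sum>a\<in>?J. joint_prob N \<rho> x a)"
    using pp by (intro sum.cong) auto
  also have "\<dots> = (\<Prod>j<N. \<Sum>ai\<in>A j x. \<rho> j x ai)"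
    unfolding joint_prob_def joint_actions_def
    by (rule prod_sum_PiE[symmetric]) (use fin in auto)
  also have "\<dots> = 1"
    using sp by (intro prod.neutral) (auto simp: is_strategy_profile_def is_stationary_strategy_def)
  finally show "(\<Sum>y\<in>UNIV. trans_mat N A p \<rho> $ x $ y) = 1" .
qed

lemma Mv_comp: "((mat 1 - \<beta> *\<^sub>R P) *v u) $ x = u $ x - \<beta> * (P *v u) $ x"
  for P :: "real^'n^'n"
  by (simp add: matrix_vector_mult_diff_rdistrib scaleR_matrix_vector_assoc[symmetric])

lemma max_principle:
  fixes P :: "real^'n::finite^'n"
  assumes nn: "\<And>x y. P $ x $ y \<ge> 0" and rs: "\<And>x. (\<Sum>y\<in>UNIV. P $ x $ y) = 1"
    and b: "0 \<le> \<beta>" "\<beta> < 1"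
    and h: "\<And>x. ((mat 1 - \<beta> *\<^sub>R P) *v u) $ x \<ge> 0"
  shows "u $ x \<ge> 0"
proof -
  define m where "m = Min (range (\<lambda>x. u $ x))"
  have mle: "m \<le> u $ z" for z unfolding m_def by (rule Min_le) auto
  have "m \<in> range (\<lambda>x. u $ x)" unfolding m_def by (rule Min_in) auto
  then obtain x0 where x0: "u $ x0 = m" by auto
  have "(P *v u) $ x0 = (\<Sum>y\<in>UNIV. P $ x0 $ y * u $ y)"
    by (simp add: matrix_vector_mult_def)
  also have "\<dots> \<ge> (\<Sum>y\<in>UNIV. P $ x0 $ y * m)"
    by (intro sum_mono mult_left_mono mle nn)
  also have "(\<Sum>y\<in>UNIV. P $ x0 $ y * m) = (\<Sum>y\<in>UNIV. P $ x0 $ y) * m"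
    by (rule sum_distrib_right[symmetric])
  finally have "(P *v u) $ x0 \<ge> m" using rs[of x0] by simp
  then have "\<beta> * (P *v u) $ x0 \<ge> \<beta> * m" using b by (simp add: mult_left_mono)
  moreover have "u $ x0 - \<beta> * (P *v u) $ x0 \<ge> 0" using h[of x0] by (simp add: Mv_comp)
  ultimately have "m \<ge> \<beta> * m" using x0 by linarith
  then have "(1 - \<beta>) * m \<ge> 0" by (simp add: algebra_simps)
  then have "m \<ge> 0" using b by (simp add: zero_le_mult_iff)
  then show ?thesis using mle[of x] by linarith
qed

lemma inv_solves:
  fixes M :: "real^'n::finite^'n"
  assumes "\<And>u. (\<forall>x. (M *v u) $ x \<ge> 0) \<Longrightarrow> (\<forall>x. u $ x \<ge> 0)"
  shows "M *v (matrix_inv M *v R) = R" "matrix_inv M *v (M *v w) = w"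
proof -
  have "inj ((*v) M)"
  proof (rule injI)
    fix a b assume e: "M *v a = M *v b"
    have "M *v (a - b) = 0" "M *v (b - a) = 0" using e by (simp_all add: matrix_vector_mult_diff_distrib)
    then have "\<forall>x. (a - b) $ x \<ge> 0" "\<forall>x. (b - a) $ x \<ge> 0" using assms by (metis order_refl zero_index)+
    then show "a = b" by (simp add: vec_eq_iff) (meson antisym)
  qed
  then have "invertible M" by (simp add: invertible_left_inverse matrix_left_invertible_injective)
  then have "M ** matrix_inv M = mat 1 \<and> matrix_inv M ** M = mat 1"
    unfolding invertible_def matrix_inv_def by (rule someI_ex)
  then show "M *v (matrix_inv M *v R) = R" "matrix_inv M *v (M *v w) = w"
    by (simp_all add: matrix_vector_mul_assoc)
qed


lemma M_monotone:
  fixes A :: "nat \<Rightarrow> 's::finite \<Rightarrow> 'a set"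
  assumes g: "is_game N A p \<beta>" and sp: "is_strategy_profile N A \<rho>"
  shows "\<And>u. (\<forall>x. ((mat 1 - \<beta> *\<^sub>R trans_mat N A p \<rho>) *v u) $ x \<ge> 0) \<Longrightarrow> (\<forall>x. u $ x \<ge> 0)"
proof -
  have b: "0 \<le> \<beta>" "\<beta> < 1" using g unfolding is_game_def by auto
  fix u :: "real^'s" assume h: "\<forall>x. ((mat 1 - \<beta> *\<^sub>R trans_mat N A p \<rho>) *v u) $ x \<ge> 0"
  show "\<forall>x. u $ x \<ge> 0"
    using max_principle[OF trans_props(1)[OF g sp] trans_props(2)[OF g sp] b] h by blast
qed

theorem mainTheorem3:
  fixes N :: nat
    and A :: "nat \<Rightarrow> 's::finite \<Rightarrow> 'a set"
    and p :: "'s \<Rightarrow> (nat \<Rightarrow> 'a) \<Rightarrow> 's \<Rightarrow> real"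
    and r :: "nat \<Rightarrow> 's \<Rightarrow> (nat \<Rightarrow> 'a) \<Rightarrow> real"
    and \<beta> :: real
    and v :: "nat \<Rightarrow> 's \<Rightarrow> real"
    and \<pi> :: "nat \<Rightarrow> 's \<Rightarrow> 'a \<Rightarrow> real"
  assumes "is_game N A p \<beta>"
    and "SG_SP_point N A p r \<beta> v \<pi>"
  shows "is_Nash N A p r \<beta> \<pi>"
proof -
  note g = assms(1)
  have sp: "is_strategy_profile N A \<pi>" using assms(2) unfolding SG_SP_point_def OP_feasible_def by auto
  have feas: "\<And>i x ai. i < N \<Longrightarrow> ai \<in> A i x \<Longrightarrow> Q_val N A p r \<beta> \<pi> i (v i) x ai \<le> v i x"
    using assms(2) unfolding SG_SP_point_def OP_feasible_def bellman_err_def by fastforce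
  have comp: "\<And>i x ai. i < N \<Longrightarrow> ai \<in> A i x \<Longrightarrow> \<pi> i x ai * Q_val N A p r \<beta> \<pi> i (v i) x ai = \<pi> i x ai * v i x"
    using assms(2) unfolding SG_SP_point_def bellman_err_def by (fastforce simp: algebra_simps)
  have fin: "\<And>x. \<forall>j<N. finite (A j x)" using g unfolding is_game_def by auto
  have "\<forall>i<N. \<forall>\<sigma>. is_stationary_strategy A i \<sigma> \<longrightarrow>
        (\<forall>x. value_vec N A p r \<beta> \<pi> i $ x \<ge> value_vec N A p r \<beta> (\<pi>(i := \<sigma>)) i $ x)"
  proof (intro allI impI)
    fix i \<sigma> x assume i: "i < N" and \<sigma>: "is_stationary_strategy A i \<sigma>"
    define \<rho> where "\<rho> = \<pi>(i := \<sigma>)"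
    define w :: "real^'s" where "w = (\<chi> y. v i y)"
    have wv: "(\<lambda>y. w $ y) = v i" unfolding w_def by simp
    have sp': "is_strategy_profile N A \<rho>"
      using sp \<sigma> unfolding is_strategy_profile_def \<rho>_def by auto
    have Qeq: "Q_val N A p r \<beta> \<rho> i = Q_val N A p r \<beta> \<pi> i"
      unfolding Q_val_def \<rho>_def by (intro ext sum.cong prod.cong refl) auto
    define M where "M = mat 1 - \<beta> *\<^sub>R trans_mat N A p \<pi>"
    define M' where "M' = mat 1 - \<beta> *\<^sub>R trans_mat N A p \<rho>"
    have Mw: "M *v w = reward_vec N A r \<pi> i"
    proof (subst vec_eq_iff, intro allI)
      fix z
      have "(M *v w) $ z = w $ z - \<beta> * (trans_mat N A p \<pi> *v w) $ z"
        unfolding M_def by (rule Mv_comp)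
      moreover have "reward_vec N A r \<pi> i $ z + \<beta> * (trans_mat N A p \<pi> *v w) $ z
          = (\<Sum>ai\<in>A i z. \<pi> i z ai * Q_val N A p r \<beta> \<pi> i (v i) z ai)"
        using row_identity[where A=A and N=N and x=z and i=i and r=r and \<rho>=\<pi> and \<beta>=\<beta> and p=p and w=w, OF fin[of z] i] unfolding wv .
      moreover have "(\<Sum>ai\<in>A i z. \<pi> i z ai * Q_val N A p r \<beta> \<pi> i (v i) z ai) = (\<Sum>ai\<in>A i z. \<pi> i z ai) * v i z"
        unfolding sum_distrib_right using comp[OF i] by (intro sum.cong) auto
      moreover have "(\<Sum>ai\<in>A i z. \<pi> i z ai) = 1"
        using sp i unfolding is_strategy_profile_def is_stationary_strategy_def by auto
      ultimately show "(M *v w) $ z = reward_vec N A r \<pi> i $ z" unfolding w_def by simp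
    qed
    have Mw': "(M' *v w) $ z \<ge> reward_vec N A r \<rho> i $ z" for z
    proof -
      have "(M' *v w) $ z = w $ z - \<beta> * (trans_mat N A p \<rho> *v w) $ z"
        unfolding M'_def by (rule Mv_comp)
      moreover have "reward_vec N A r \<rho> i $ z + \<beta> * (trans_mat N A p \<rho> *v w) $ z
          = (\<Sum>ai\<in>A i z. \<sigma> z ai * Q_val N A p r \<beta> \<pi> i (v i) z ai)"
        using row_identity[where A=A and N=N and x=z and i=i and r=r and \<rho>=\<rho> and \<beta>=\<beta> and p=p and w=w, OF fin[of z] i] unfolding wv Qeq by (simp add: \<rho>_def)
      moreover have "(\<Sum>ai\<in>A i z. \<sigma> z ai * Q_val N A p r \<beta> \<pi> i (v i) z ai) \<le> (\<Sum>ai\<in>A i z. \<sigma> z ai * v i z)"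
        using feas[OF i] \<sigma> unfolding is_stationary_strategy_def by (intro sum_mono mult_left_mono) auto
      moreover have "(\<Sum>ai\<in>A i z. \<sigma> z ai * v i z) = v i z"
        using \<sigma> unfolding is_stationary_strategy_def by (simp add: sum_distrib_right[symmetric])
      ultimately show ?thesis unfolding w_def by simp
    qed
    have mon: "\<And>u. (\<forall>x. (M *v u) $ x \<ge> 0) \<Longrightarrow> (\<forall>x. u $ x \<ge> 0)"
      unfolding M_def by (rule M_monotone[OF g sp])
    have mon': "\<And>u. (\<forall>x. (M' *v u) $ x \<ge> 0) \<Longrightarrow> (\<forall>x. u $ x \<ge> 0)"
      unfolding M'_def by (rule M_monotone[OF g sp'])
    have v1: "value_vec N A p r \<beta> \<pi> i = w"
      unfolding value_vec_def M_def[symmetric] Mw[symmetric] by (rule inv_solves(2)[OF mon])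
    define v' where "v' = value_vec N A p r \<beta> \<rho> i"
    have Mv': "M' *v v' = reward_vec N A r \<rho> i"
      unfolding v'_def value_vec_def M'_def[symmetric] by (rule inv_solves(1)[OF mon'])
    have "\<forall>z. (M' *v (w - v')) $ z \<ge> 0"
      using Mw' Mv' by (simp add: matrix_vector_mult_diff_distrib)
    then have "(w - v') $ x \<ge> 0" using mon' by blast
    then show "value_vec N A p r \<beta> \<pi> i $ x \<ge> value_vec N A p r \<beta> (\<pi>(i := \<sigma>)) i $ x"
      using v1 unfolding v'_def \<rho>_def by simp
  qed
  then show ?thesis using sp unfolding is_Nash_def by blast
qed

end
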